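(* For fixed $x,y\ge 1$, let $a_{x,y,n}$ denote the probability that the $(x,y)$ edge-addition process on $n$ vertices generates an $(x,y)$ task-dependency graph. Then $\lim_{n\to\infty}a_{x,y,n}=1$.
   Context: A task-dependency graph is a finite directed acyclic graph (no loops, no multiple edges). A vertex is initial if it has in-degree $0$ and terminal if it has out-degree $0$ (an isolated vertex is both). An $(x,y)$ task-dependency graph has exactly $x$ initial and exactly $y$ terminal vertices. The $(x,y)$ edge-addition process on $n$ vertices: start with the empty graph on $\{1,\dots,n\}$ and repeatedly add, uniformly at random, an edge $(a,b)$ with $a<b$ not yet present; if an addition would cause fewer than $x$ initial vertices or fewer than $y$ terminal vertices, it is cancelled. The process halts if the graph after some edge addition is an $(x,y)$ task-dependency graph, or if no more edges can be added; the result is the final graph. *)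

theory Defs
  imports "HOL-Probability.Probability"
begin

text \<open>A graph on the vertex set {1..n} is represented by its edge set E, a set of
  pairs (a,b) with 1 \<le> a < b \<le> n (edge from a to b).  Such graphs are automatically
  acyclic and have no loops or multiple edges.\<close>

definition initial_vertices :: "nat \<Rightarrow> (nat \<times> nat) set \<Rightarrow> nat set" where
  "initial_vertices n E = {v \<in> {1..n}. \<not> (\<exists>u. (u, v) \<in> E)}"

definition terminal_vertices :: "nat \<Rightarrow> (nat \<times> nat) set \<Rightarrow> nat set" where
  "terminal_vertices n E = {v \<in> {1..n}. \<not> (\<exists>w. (v, w) \<in> E)}"

definition is_tdg :: "nat \<Rightarrow> nat \<Rightarrow> nat \<Rightarrow> (nat \<times> nat) set \<Rightarrow> bool" where
  "is_tdg x y n E \<longleftrightarrow> card (initial_vertices n E) = x \<and> card (terminal_vertices n E) = y"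

definition allowed_edges :: "nat \<Rightarrow> nat \<Rightarrow> nat \<Rightarrow> (nat \<times> nat) set \<Rightarrow> (nat \<times> nat) set" where
  "allowed_edges x y n E = {(a, b). 1 \<le> a \<and> a < b \<and> b \<le> n \<and> (a, b) \<notin> E \<and>
      card (initial_vertices n (insert (a, b) E)) \<ge> x \<and>
      card (terminal_vertices n (insert (a, b) E)) \<ge> y}"

text \<open>Drawing uniformly
  among non-present edges and cancelling forbidden ones is equivalent (in distribution of
  the next successful addition) to drawing uniformly among the allowed edges, since a
  cancelled edge stays cancelled forever (initial/terminal sets only shrink).\<close>
primrec edge_process_fuel ::
  "nat \<Rightarrow> nat \<Rightarrow> nat \<Rightarrow> nat \<Rightarrow> (nat \<times> nat) set \<Rightarrow> (nat \<times> nat) set pmf" where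
  "edge_process_fuel x y n 0 E = return_pmf E"
| "edge_process_fuel x y n (Suc k) E =
     (if allowed_edges x y n E = {} then return_pmf E
      else pmf_of_set (allowed_edges x y n E) \<bind> (\<lambda>e.
             if is_tdg x y n (insert e E) then return_pmf (insert e E)
             else edge_process_fuel x y n k (insert e E)))"

text \<open>The final graph of the (x,y) edge-addition process on n vertices; fuel n*n exceeds
  the maximal number n(n-1)/2 of edges, so the fuel never runs out.\<close>
definition edge_process :: "nat \<Rightarrow> nat \<Rightarrow> nat \<Rightarrow> (nat \<times> nat) set pmf" where
  "edge_process x y n = edge_process_fuel x y n (n * n) {}"

end

theory Submission imports Defs begin

definition Vn :: "nat \<Rightarrow> (nat \<times> nat) set" where
  "Vn n = {(a,b). 1 \<le> a \<and> a < b \<and> b \<le> n}"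

lemma Vn_sub: "Vn n \<subseteq> {1..n} \<times> {1..n}"
  by (auto simp: Vn_def)

lemma finite_Vn: "finite (Vn n)"
  by (rule finite_subset[OF Vn_sub]) simp

lemma card_Vn: "card (Vn n) \<le> n * n"
  using card_mono[OF _ Vn_sub] by (simp add: card_cartesian_product)

lemma Tv_ins: "terminal_vertices n (insert e E) = terminal_vertices n E - {fst e}"
  by (cases e) (auto simp: terminal_vertices_def)

lemma Iv_ins: "initial_vertices n (insert e E) = initial_vertices n E - {snd e}"
  by (cases e) (auto simp: initial_vertices_def)

lemma fin_Tv: "finite (terminal_vertices n E)"
  by (rule finite_subset[of _ "{1..n}"]) (auto simp: terminal_vertices_def)

lemma fin_Iv: "finite (initial_vertices n E)"
  by (rule finite_subset[of _ "{1..n}"]) (auto simp: initial_vertices_def)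

lemma allowed_iff: "(a,b) \<in> allowed_edges x y n E \<longleftrightarrow> 1 \<le> a \<and> a < b \<and> b \<le> n \<and> (a,b) \<notin> E \<and>
   x \<le> card (initial_vertices n E - {b}) \<and> y \<le> card (terminal_vertices n E - {a})"
  using Tv_ins[of n "(a,b)" E] Iv_ins[of n "(a,b)" E] by (simp add: allowed_edges_def)

lemma allowed_sub: "allowed_edges x y n E \<subseteq> Vn n"
  by (auto simp: allowed_edges_def Vn_def)

lemma finite_allowed: "finite (allowed_edges x y n E)"
  by (rule finite_subset[OF allowed_sub finite_Vn])

fun hpot :: "nat \<Rightarrow> nat \<Rightarrow> real" where
  "hpot y 0 = 1"
| "hpot y (Suc t) = (if Suc t \<le> y then 1 else hpot y t * (2 * real (Suc t)) / (2 * real (Suc t) + 1))"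

lemma hpot_le: "t \<le> y \<Longrightarrow> hpot y t = 1"
  by (cases t) auto

lemma hpot_pos: "hpot y t > 0"
  by (induction t) auto

lemma hpot_pred:
  assumes "y < T" shows "hpot y (T - 1) = hpot y T + hpot y T / (2 * real T)"
proof -
  obtain t where T: "T = Suc t" using assms by (cases T) auto
  have "hpot y T = hpot y t * (2 * real T) / (2 * real T + 1)"
    using assms T by simp
  then show ?thesis using T by (simp add: field_simps)
qed

lemma hpot_sq: "y \<le> n \<Longrightarrow> (hpot y n)^2 \<le> (real y + 1) / (real n + 1)"
proof (induction n)
  case 0
  then show ?case by simp
next
  case (Suc n)
  show ?case
  proof (cases "Suc n \<le> y")
    case True
    then have "y = Suc n" using Suc by simp
    then show ?thesis using True by simp
  next
    case False
    then have IH: "(hpot y n)^2 \<le> (real y + 1) / (real n + 1)" using Suc by simp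
    have eq: "(hpot y (Suc n))^2 = (hpot y n)^2 * ((2 * real n + 2) / (2 * real n + 3))^2"
    proof -
      have "hpot y (Suc n) = hpot y n * ((2 * real n + 2) / (2 * real n + 3))"
        using False by (simp add: field_simps)
      then show ?thesis by (simp only: power_mult_distrib)
    qed
    have "(hpot y n)^2 * ((2 * real n + 2) / (2 * real n + 3))^2
       \<le> (real y + 1) / (real n + 1) * ((2 * real n + 2) / (2 * real n + 3))^2"
      by (rule mult_right_mono[OF IH]) simp
    also have "\<dots> \<le> (real y + 1) / (real (Suc n) + 1)"
    proof -
      have "(2 * real n + 2)^2 * (real n + 2) \<le> (2 * real n + 3)^2 * (real n + 1)"
        by (simp add: power2_eq_square algebra_simps)
      then have "((2 * real n + 2) / (2 * real n + 3))^2 / (real n + 1) \<le> 1 / (real n + 2)"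
      proof -
        have p: "0 < (2 * real n + 3)^2 * (real n + 1)" "0 < real n + 2" by auto
        have "((2 * real n + 2) / (2 * real n + 3))^2 / (real n + 1) = (2 * real n + 2)^2 / ((2 * real n + 3)^2 * (real n + 1))"
          by (simp add: power_divide)
        also have "\<dots> \<le> 1 / (real n + 2)"
          using p \<open>(2 * real n + 2)^2 * (real n + 2) \<le> (2 * real n + 3)^2 * (real n + 1)\<close>
          by (simp add: divide_le_eq le_divide_eq mult.commute)
        finally show ?thesis .
      qed
      then have "(real y + 1) * (((2 * real n + 2) / (2 * real n + 3))^2 / (real n + 1)) \<le> (real y + 1) * (1 / (real n + 2))"
        by (rule mult_left_mono) simp
      then show ?thesis by (simp add: field_simps)
    qed
    finally show ?thesis using eq by simp
  qed
qed


definition t1 :: "nat \<Rightarrow> nat \<Rightarrow> (nat \<times> nat) set \<Rightarrow> real" where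
  "t1 y n E = (if 1 \<in> terminal_vertices n E then hpot y (card (terminal_vertices n E)) else 0)"

definition t2 :: "nat \<Rightarrow> nat \<Rightarrow> (nat \<times> nat) set \<Rightarrow> real" where
  "t2 x n E = (if n \<in> initial_vertices n E then hpot x (card (initial_vertices n E)) else 0)"

definition phi :: "nat \<Rightarrow> nat \<Rightarrow> nat \<Rightarrow> (nat \<times> nat) set \<Rightarrow> real" where
  "phi x y n E = t1 y n E + t2 x n E"

lemma t1_nonneg: "0 \<le> t1 y n E"
  using hpot_pos[of y] by (simp add: t1_def less_imp_le)

lemma t2_nonneg: "0 \<le> t2 x n E"
  using hpot_pos[of x] by (simp add: t2_def less_imp_le)

lemma phi_nonneg: "0 \<le> phi x y n E"
  using t1_nonneg t2_nonneg by (simp add: phi_def)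

lemma stuck1:
  assumes "allowed_edges x y n E = {}" "x < card (initial_vertices n E)"
    "y \<le> card (terminal_vertices n E)" "1 \<notin> terminal_vertices n E" "1 \<le> x"
  shows False
proof -
  have "initial_vertices n E \<subseteq> {1}"
  proof
    fix v assume v: "v \<in> initial_vertices n E"
    hence v1: "1 \<le> v" "v \<le> n" and nin: "(1,v) \<notin> E" by (auto simp: initial_vertices_def)
    show "v \<in> {1}"
    proof (rule ccontr)
      assume "v \<notin> {1}" hence "1 < v" using v1 by auto
      have "card (initial_vertices n E - {v}) = card (initial_vertices n E) - 1"
        using v fin_Iv by simp
      hence "x \<le> card (initial_vertices n E - {v})" using assms(2) by simp
      moreover have "terminal_vertices n E - {1} = terminal_vertices n E" using assms(4) by auto
      ultimately have "(1,v) \<in> allowed_edges x y n E"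
        using allowed_iff nin assms(3) \<open>1 < v\<close> v1 by simp
      thus False using assms(1) by simp
    qed
  qed
  hence "card (initial_vertices n E) \<le> card {1::nat}"
    by (intro card_mono) simp_all
  with assms show False by simp
qed

lemma stuck2:
  assumes "allowed_edges x y n E = {}" "x \<le> card (initial_vertices n E)"
    "y < card (terminal_vertices n E)" "n \<notin> initial_vertices n E" "1 \<le> y"
  shows False
proof -
  have "terminal_vertices n E \<subseteq> {n}"
  proof
    fix v assume v: "v \<in> terminal_vertices n E"
    hence v1: "1 \<le> v" "v \<le> n" and nin: "(v,n) \<notin> E" by (auto simp: terminal_vertices_def)
    show "v \<in> {n}"
    proof (rule ccontr)
      assume "v \<notin> {n}" hence "v < n" using v1 by auto
      have "card (terminal_vertices n E - {v}) = card (terminal_vertices n E) - 1"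
        using v fin_Tv by simp
      hence "y \<le> card (terminal_vertices n E - {v})" using assms(3) by simp
      moreover have "initial_vertices n E - {n} = initial_vertices n E" using assms(4) by auto
      ultimately have "(v,n) \<in> allowed_edges x y n E"
        using allowed_iff nin assms(2) \<open>v < n\<close> v1 by simp
      thus False using assms(1) by simp
    qed
  qed
  hence "card (terminal_vertices n E) \<le> card {n}"
    by (intro card_mono) simp_all
  with assms show False by simp
qed

lemma stuck3:
  assumes "allowed_edges x y n E = {}" "x < card (initial_vertices n E)"
    "y < card (terminal_vertices n E)" "1 \<le> x" "2 \<le> n"
  shows False
proof -
  have t: "1 \<in> terminal_vertices n E"
  proof (rule ccontr)
    assume "1 \<notin> terminal_vertices n E"
    then show False using stuck1[OF assms(1,2) _ _ assms(4)] assms(3) by simp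
  qed
  hence nin: "(1,n) \<notin> E" by (auto simp: terminal_vertices_def)
  have "card (initial_vertices n E) - 1 \<le> card (initial_vertices n E - {n})"
    by (simp add: card_Diff_singleton_if fin_Iv)
  hence "x \<le> card (initial_vertices n E - {n})" using assms(2) by simp
  moreover have "y \<le> card (terminal_vertices n E - {1})"
    using t assms(3) fin_Tv by simp
  ultimately have "(1,n) \<in> allowed_edges x y n E"
    using allowed_iff nin assms(5) by simp
  thus False using assms(1) by simp
qed

lemma stuck_phi:
  assumes "allowed_edges x y n E = {}" "x \<le> card (initial_vertices n E)"
    "y \<le> card (terminal_vertices n E)" "\<not> is_tdg x y n E" "1 \<le> x" "1 \<le> y" "2 \<le> n"
  shows "1 \<le> phi x y n E"
proof (cases "x < card (initial_vertices n E)")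
  case True
  then have ty: "card (terminal_vertices n E) = y"
    using stuck3[OF assms(1) True _ assms(5,7)] assms(3) le_neq_implies_less by blast
  have "1 \<in> terminal_vertices n E" using stuck1[OF assms(1) True assms(3) _ assms(5)] by blast
  then have "t1 y n E = 1" using ty by (simp add: t1_def hpot_le)
  then show ?thesis using t2_nonneg[of x n E] by (simp add: phi_def)
next
  case False
  then have ix: "card (initial_vertices n E) = x" using assms(2) by simp
  then have ty: "y < card (terminal_vertices n E)" using assms(3,4) by (simp add: is_tdg_def)
  have "n \<in> initial_vertices n E" using stuck2[OF assms(1) assms(2) ty _ assms(6)] by blast
  then have "t2 x n E = 1" using ix by (simp add: t2_def hpot_le)
  then show ?thesis using t1_nonneg[of y n E] by (simp add: phi_def)
qed


lemma step1:
  assumes "x \<le> card (initial_vertices n E)" "y \<le> card (terminal_vertices n E)" "2*x+2 \<le> n"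
  shows "(\<Sum>e\<in>allowed_edges x y n E. t1 y n (insert e E)) \<le> real (card (allowed_edges x y n E)) * t1 y n E"
proof -
  define A where "A = allowed_edges x y n E"
  define T where "T = terminal_vertices n E"
  have finA: "finite A" unfolding A_def by (rule finite_allowed)
  have Tins: "\<And>e. terminal_vertices n (insert e E) = T - {fst e}" unfolding T_def by (rule Tv_ins)
  have Aprop: "\<And>e. e \<in> A \<Longrightarrow> y \<le> card (T - {fst e}) \<and> 1 \<le> fst e \<and> fst e < snd e \<and> snd e \<le> n"
    unfolding A_def T_def using allowed_iff by (metis prod.collapse)
  have main: "(\<Sum>e\<in>A. t1 y n (insert e E)) \<le> real (card A) * t1 y n E"
  proof (cases "1 \<in> T")
    case False
    then have "\<And>e. t1 y n (insert e E) = 0" using Tins by (simp add: t1_def)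
    then show ?thesis using t1_nonneg[of y n E] by simp
  next
    case T1: True
    show ?thesis
    proof (cases "card T = y")
      case True
      have "\<And>e. e \<in> A \<Longrightarrow> t1 y n (insert e E) \<le> t1 y n E"
      proof -
        fix e assume e: "e \<in> A"
        have "card (T - {fst e}) \<le> card T" using fin_Tv T_def by (simp add: card_mono)
        then have "card (T - {fst e}) = y" using Aprop[OF e] True by simp
        then show "t1 y n (insert e E) \<le> t1 y n E"
          using T1 True Tins[of e] hpot_pos[of y] by (simp add: t1_def T_def[symmetric] hpot_le)
      qed
      then show ?thesis using sum_bounded_above[of A "\<lambda>e. t1 y n (insert e E)"] by simp
    next
      case False
      then have Ty: "y < card T" using assms(2) T_def by simp
      define c where "c = card T"
      define H where "H = hpot y c"
      have Hpos: "0 < H" unfolding H_def by (rule hpot_pos)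
      have t1E: "t1 y n E = H" using T1 by (simp add: t1_def T_def[symmetric] H_def c_def)
      define A1 where "A1 = A \<inter> {e. fst e = 1}"
      define A2 where "A2 = A \<inter> {e. fst e \<noteq> 1 \<and> fst e \<in> T}"
      define g :: "nat \<times> nat \<Rightarrow> real" where "g = (\<lambda>e. H - (if fst e = 1 then H else 0) + (if fst e \<noteq> 1 \<and> fst e \<in> T then H / (2 * c) else 0))"
      have le_g: "t1 y n (insert e E) \<le> g e" if e: "e \<in> A" for e
      proof (cases "fst e = 1")
        case True
        then show ?thesis using Tins[of e] by (simp add: t1_def g_def)
      next
        case ne: False
        show ?thesis
        proof (cases "fst e \<in> T")
          case True
          have "card (T - {fst e}) = c - 1" using True fin_Tv T_def c_def by simp
          then have "t1 y n (insert e E) = hpot y (c - 1)" using T1 ne Tins[of e] by (simp add: t1_def)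
          also have "\<dots> = H + H / (2 * c)" unfolding H_def using hpot_pred Ty c_def by simp
          finally show ?thesis using ne True by (simp add: g_def)
        next
          case False
          then have "T - {fst e} = T" by auto
          then show ?thesis using T1 ne False Tins[of e] by (simp add: t1_def g_def H_def c_def)
        qed
      qed
      have sumg: "(\<Sum>e\<in>A. g e) = real (card A) * H - real (card A1) * H + real (card A2) * (H / (2 * c))"
        unfolding g_def A1_def A2_def using finA
        by (simp add: sum.distrib sum_subtractf sum.If_cases Int_def)
      have A2sub: "A2 \<subseteq> T \<times> {1..n}"
        using Aprop unfolding A2_def by force
      have cA2: "card A2 \<le> c * n"
        using card_mono[OF _ A2sub] fin_Tv T_def by (simp add: card_cartesian_product c_def)
      have cA1: "n - 1 - x \<le> card A1"
      proof -
        have mem: "(1, b) \<in> A1" if b: "b \<in> {2..n}" "x \<le> card (initial_vertices n E - {b})" for b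
        proof -
          have "(1,b) \<notin> E" using T1 T_def by (auto simp: terminal_vertices_def)
          moreover have "y \<le> card (T - {1})" using T1 Ty fin_Tv T_def by simp
          ultimately show ?thesis using b unfolding A1_def A_def T_def by (simp add: allowed_iff)
        qed
        show ?thesis
        proof (cases "x < card (initial_vertices n E)")
          case True
          have "\<And>b. b \<in> {2..n} \<Longrightarrow> x \<le> card (initial_vertices n E - {b})"
            using True by (simp add: card_Diff_singleton_if fin_Iv) linarith
          then have "(\<lambda>b. (1,b)) ` {2..n} \<subseteq> A1" using mem by blast
          moreover have "finite A1" using finA A1_def by simp
          ultimately have "card ((\<lambda>b. (1::nat,b)) ` {2..n}) \<le> card A1" by (simp add: card_mono)
          moreover have "card ((\<lambda>b. (1::nat,b)) ` {2..n}) = n - 1"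
            by (subst card_image) (auto simp: inj_on_def)
          ultimately show ?thesis by simp
        next
          case False
          then have ix: "card (initial_vertices n E) = x" using assms(1) by simp
          have "\<And>b. b \<in> {2..n} - initial_vertices n E \<Longrightarrow> x \<le> card (initial_vertices n E - {b})"
            using ix by simp
          then have "(\<lambda>b. (1,b)) ` ({2..n} - initial_vertices n E) \<subseteq> A1" using mem by blast
          moreover have "finite A1" using finA A1_def by simp
          ultimately have "card ((\<lambda>b. (1::nat,b)) ` ({2..n} - initial_vertices n E)) \<le> card A1" by (simp add: card_mono)
          moreover have "card ((\<lambda>b. (1::nat,b)) ` ({2..n} - initial_vertices n E)) = card ({2..n} - initial_vertices n E)"
            by (subst card_image) (auto simp: inj_on_def)
          moreover have "card {2..n} - card (initial_vertices n E) \<le> card ({2..n} - initial_vertices n E)"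
            by (rule diff_card_le_card_Diff) (simp add: fin_Iv)
          ultimately show ?thesis using ix by simp
        qed
      qed
      have "c * n \<le> 2 * c * card A1"
      proof -
        have "n \<le> 2 * card A1" using cA1 assms(3) by linarith
        then show ?thesis by simp
      qed
      then have "card A2 \<le> 2 * c * card A1" using cA2 by linarith
      then have "real (card A2) \<le> real (2 * c * card A1)" by (simp only: of_nat_le_iff)
      then have "real (card A2) \<le> 2 * real c * real (card A1)" by simp
      moreover have "0 < real c" using Ty c_def by simp
      ultimately have "real (card A2) * (H / (2 * c)) \<le> real (card A1) * H"
        using Hpos by (simp add: field_simps mult_right_mono)
      then have "(\<Sum>e\<in>A. g e) \<le> real (card A) * H" using sumg by simp
      moreover have "(\<Sum>e\<in>A. t1 y n (insert e E)) \<le> (\<Sum>e\<in>A. g e)"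
        by (rule sum_mono) (rule le_g)
      ultimately show ?thesis using t1E by simp
    qed
  qed
  then show ?thesis unfolding A_def .
qed


lemma step2:
  assumes "x \<le> card (initial_vertices n E)" "y \<le> card (terminal_vertices n E)" "2*y+2 \<le> n"
  shows "(\<Sum>e\<in>allowed_edges x y n E. t2 x n (insert e E)) \<le> real (card (allowed_edges x y n E)) * t2 x n E"
proof -
  define A where "A = allowed_edges x y n E"
  define T where "T = initial_vertices n E"
  have finA: "finite A" unfolding A_def by (rule finite_allowed)
  have Tins: "\<And>e. initial_vertices n (insert e E) = T - {snd e}" unfolding T_def by (rule Iv_ins)
  have Aprop: "\<And>e. e \<in> A \<Longrightarrow> x \<le> card (T - {snd e}) \<and> 1 \<le> fst e \<and> fst e < snd e \<and> snd e \<le> n"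
    unfolding A_def T_def using allowed_iff by (metis prod.collapse)
  have main: "(\<Sum>e\<in>A. t2 x n (insert e E)) \<le> real (card A) * t2 x n E"
  proof (cases "n \<in> T")
    case False
    then have "\<And>e. t2 x n (insert e E) = 0" using Tins by (simp add: t2_def)
    then show ?thesis using t2_nonneg[of x n E] by simp
  next
    case T1: True
    show ?thesis
    proof (cases "card T = x")
      case True
      have "\<And>e. e \<in> A \<Longrightarrow> t2 x n (insert e E) \<le> t2 x n E"
      proof -
        fix e assume e: "e \<in> A"
        have "card (T - {snd e}) \<le> card T" using fin_Iv T_def by (simp add: card_mono)
        then have "card (T - {snd e}) = x" using Aprop[OF e] True by simp
        then show "t2 x n (insert e E) \<le> t2 x n E"
          using T1 True Tins[of e] hpot_pos[of x] by (simp add: t2_def T_def[symmetric] hpot_le)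
      qed
      then show ?thesis using sum_bounded_above[of A "\<lambda>e. t2 x n (insert e E)"] by simp
    next
      case False
      then have Ty: "x < card T" using assms(1) T_def by simp
      define c where "c = card T"
      define H where "H = hpot x c"
      have Hpos: "0 < H" unfolding H_def by (rule hpot_pos)
      have t1E: "t2 x n E = H" using T1 by (simp add: t2_def T_def[symmetric] H_def c_def)
      define A1 where "A1 = A \<inter> {e. snd e = n}"
      define A2 where "A2 = A \<inter> {e. snd e \<noteq> n \<and> snd e \<in> T}"
      define g :: "nat \<times> nat \<Rightarrow> real" where "g = (\<lambda>e. H - (if snd e = n then H else 0) + (if snd e \<noteq> n \<and> snd e \<in> T then H / (2 * c) else 0))"
      have le_g: "t2 x n (insert e E) \<le> g e" if e: "e \<in> A" for e
      proof (cases "snd e = n")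
        case True
        then show ?thesis using Tins[of e] by (simp add: t2_def g_def)
      next
        case ne: False
        show ?thesis
        proof (cases "snd e \<in> T")
          case True
          have "card (T - {snd e}) = c - 1" using True fin_Iv T_def c_def by simp
          then have "t2 x n (insert e E) = hpot x (c - 1)" using T1 ne Tins[of e] by (simp add: t2_def)
          also have "\<dots> = H + H / (2 * c)" unfolding H_def using hpot_pred Ty c_def by simp
          finally show ?thesis using ne True by (simp add: g_def)
        next
          case False
          then have "T - {snd e} = T" by auto
          then show ?thesis using T1 ne False Tins[of e] by (simp add: t2_def g_def H_def c_def)
        qed
      qed
      have sumg: "(\<Sum>e\<in>A. g e) = real (card A) * H - real (card A1) * H + real (card A2) * (H / (2 * c))"
        unfolding g_def A1_def A2_def using finA
        by (simp add: sum.distrib sum_subtractf sum.If_cases Int_def)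
      have A2sub: "A2 \<subseteq> {1..n} \<times> T"
        using Aprop unfolding A2_def by force
      have cA2: "card A2 \<le> n * c"
        using card_mono[OF _ A2sub] fin_Iv T_def by (simp add: card_cartesian_product c_def)
      have cA1: "n - 1 - y \<le> card A1"
      proof -
        have mem: "(a, n) \<in> A1" if b: "a \<in> {1..n-1}" "y \<le> card (terminal_vertices n E - {a})" for a
        proof -
          have "(a,n) \<notin> E" using T1 T_def by (auto simp: initial_vertices_def)
          moreover have "x \<le> card (T - {n})" using T1 Ty fin_Iv T_def by simp
          ultimately show ?thesis using b unfolding A1_def A_def T_def by (auto simp add: allowed_iff)
        qed
        show ?thesis
        proof (cases "y < card (terminal_vertices n E)")
          case True
          have "\<And>b. b \<in> {1..n-1} \<Longrightarrow> y \<le> card (terminal_vertices n E - {b})"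
            using True by (simp add: card_Diff_singleton_if fin_Tv) linarith
          then have "(\<lambda>b. (b,n)) ` {1..n-1} \<subseteq> A1" using mem by blast
          moreover have "finite A1" using finA A1_def by simp
          ultimately have "card ((\<lambda>b. (b,n)) ` {1..n-1}) \<le> card A1" by (simp add: card_mono)
          moreover have "card ((\<lambda>b. (b,n)) ` {1..n-1}) = n - 1"
            by (subst card_image) (auto simp: inj_on_def)
          ultimately show ?thesis by simp
        next
          case False
          then have ix: "card (terminal_vertices n E) = y" using assms(2) by simp
          have "\<And>b. b \<in> {1..n-1} - terminal_vertices n E \<Longrightarrow> y \<le> card (terminal_vertices n E - {b})"
            using ix by simp
          then have "(\<lambda>b. (b,n)) ` ({1..n-1} - terminal_vertices n E) \<subseteq> A1" using mem by blast
          moreover have "finite A1" using finA A1_def by simp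
          ultimately have "card ((\<lambda>b. (b,n)) ` ({1..n-1} - terminal_vertices n E)) \<le> card A1" by (simp add: card_mono)
          moreover have "card ((\<lambda>b. (b,n)) ` ({1..n-1} - terminal_vertices n E)) = card ({1..n-1} - terminal_vertices n E)"
            by (subst card_image) (auto simp: inj_on_def)
          moreover have "card {1..n-1} - card (terminal_vertices n E) \<le> card ({1..n-1} - terminal_vertices n E)"
            by (rule diff_card_le_card_Diff) (simp add: fin_Tv)
          ultimately show ?thesis using ix by simp
        qed
      qed
      have "n * c \<le> 2 * c * card A1"
      proof -
        have "n \<le> 2 * card A1" using cA1 assms(3) by linarith
        then show ?thesis by simp
      qed
      then have "card A2 \<le> 2 * c * card A1" using cA2 by linarith
      then have "real (card A2) \<le> real (2 * c * card A1)" by (simp only: of_nat_le_iff)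
      then have "real (card A2) \<le> 2 * real c * real (card A1)" by simp
      moreover have "0 < real c" using Ty c_def by simp
      ultimately have "real (card A2) * (H / (2 * c)) \<le> real (card A1) * H"
        using Hpos by (simp add: field_simps mult_right_mono)
      then have "(\<Sum>e\<in>A. g e) \<le> real (card A) * H" using sumg by simp
      moreover have "(\<Sum>e\<in>A. t2 x n (insert e E)) \<le> (\<Sum>e\<in>A. g e)"
        by (rule sum_mono) (rule le_g)
      ultimately show ?thesis using t1E by simp
    qed
  qed
  then show ?thesis unfolding A_def .
qed


lemma prob_bind_pmf_of_set:
  assumes "finite A" "A \<noteq> {}"
  shows "measure_pmf.prob (pmf_of_set A \<bind> f) B = (\<Sum>e\<in>A. measure_pmf.prob (f e) B) / card A"
proof -
  have "measure_pmf.prob (pmf_of_set A \<bind> f) B = (\<integral>e. measure_pmf.prob (f e) B \<partial>measure_pmf (pmf_of_set A))"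
    unfolding measure_pmf_bind
    using measurable_measure_pmf[of f]
    by (subst measure_pmf.measure_bind[where N="count_space UNIV"]) (auto dest: measurable_space)
  also have "\<dots> = (\<Sum>e\<in>A. measure_pmf.prob (f e) B) / card A"
    using assms by (simp add: integral_pmf_of_set)
  finally show ?thesis .
qed

lemma main_bound:
  assumes xy: "1 \<le> x" "1 \<le> y" "2*(x+y) \<le> n"
  shows "E \<subseteq> Vn n \<Longrightarrow> x \<le> card (initial_vertices n E) \<Longrightarrow> y \<le> card (terminal_vertices n E)
    \<Longrightarrow> card (Vn n) \<le> card E + k
    \<Longrightarrow> measure_pmf.prob (edge_process_fuel x y n k E) {E. \<not> is_tdg x y n E} \<le> phi x y n E"
proof (induction k arbitrary: E)
  case 0
  have "finite E" using 0 by (metis finite_subset finite_Vn)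
  then have "E = Vn n" using 0 card_subset_eq[OF finite_Vn] by (metis add_0_right card_mono finite_Vn le_antisym)
  then have "allowed_edges x y n E = {}" using allowed_sub[of x y n E] by (auto simp: allowed_edges_def)
  then have "\<not> is_tdg x y n E \<Longrightarrow> 1 \<le> phi x y n E"
    using stuck_phi 0 xy by simp
  then show ?case using phi_nonneg[of x y n E] by (cases "is_tdg x y n E") auto
next
  case (Suc k)
  show ?case
  proof (cases "allowed_edges x y n E = {}")
    case True
    then have "\<not> is_tdg x y n E \<Longrightarrow> 1 \<le> phi x y n E"
      using stuck_phi Suc.prems xy by simp
    then show ?thesis using True phi_nonneg[of x y n E] by (cases "is_tdg x y n E") auto
  next
    case False
    define A where "A = allowed_edges x y n E"
    define f where "f = (\<lambda>e. if is_tdg x y n (insert e E) then return_pmf (insert e E)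
             else edge_process_fuel x y n k (insert e E))"
    have finA: "finite A" unfolding A_def by (rule finite_allowed)
    have AnE: "A \<noteq> {}" using False A_def by simp
    have finE: "finite E" using Suc.prems(1) by (metis finite_subset finite_Vn)
    have eq: "edge_process_fuel x y n (Suc k) E = pmf_of_set A \<bind> f"
      using False by (simp add: A_def f_def)
    have each: "measure_pmf.prob (f e) {E. \<not> is_tdg x y n E} \<le> phi x y n (insert e E)" if e: "e \<in> A" for e
    proof (cases "is_tdg x y n (insert e E)")
      case True
      then show ?thesis using phi_nonneg by (simp add: f_def)
    next
      case nt: False
      obtain a b where ab: "e = (a,b)" by (cases e)
      have al: "1 \<le> a \<and> a < b \<and> b \<le> n \<and> (a,b) \<notin> E \<and>
          x \<le> card (initial_vertices n E - {b}) \<and> y \<le> card (terminal_vertices n E - {a})"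
        using e ab allowed_iff A_def by simp
      have "insert e E \<subseteq> Vn n" using Suc.prems(1) al ab by (auto simp: Vn_def)
      moreover have "x \<le> card (initial_vertices n (insert e E))" using al ab Iv_ins[of n e E] by simp
      moreover have "y \<le> card (terminal_vertices n (insert e E))" using al ab Tv_ins[of n e E] by simp
      moreover have "card (Vn n) \<le> card (insert e E) + k" using al ab finE Suc.prems(4) by simp
      ultimately show ?thesis using Suc.IH nt by (simp add: f_def)
    qed
    have "measure_pmf.prob (edge_process_fuel x y n (Suc k) E) {E. \<not> is_tdg x y n E}
        = (\<Sum>e\<in>A. measure_pmf.prob (f e) {E. \<not> is_tdg x y n E}) / card A"
      unfolding eq by (rule prob_bind_pmf_of_set[OF finA AnE])
    also have "\<dots> \<le> (\<Sum>e\<in>A. phi x y n (insert e E)) / card A"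
      by (intro divide_right_mono sum_mono each) simp_all
    also have "\<dots> \<le> phi x y n E"
    proof -
      have "(\<Sum>e\<in>A. phi x y n (insert e E)) = (\<Sum>e\<in>A. t1 y n (insert e E)) + (\<Sum>e\<in>A. t2 x n (insert e E))"
        by (simp add: phi_def sum.distrib)
      also have "\<dots> \<le> real (card A) * t1 y n E + real (card A) * t2 x n E"
        unfolding A_def using step1[of x n E y] step2[of x n E y] Suc.prems xy by (intro add_mono) simp_all
      finally have "(\<Sum>e\<in>A. phi x y n (insert e E)) \<le> real (card A) * phi x y n E"
        by (simp add: phi_def algebra_simps)
      moreover have "0 < real (card A)" using finA AnE by (simp add: card_gt_0_iff)
      ultimately show ?thesis by (simp add: divide_le_eq mult.commute)
    qed
    finally show ?thesis .
  qed
qed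


lemma lim_aux: "(\<lambda>n. sqrt ((c::real) / (real n + 1))) \<longlonglongrightarrow> 0"
proof -
  have "(\<lambda>n. c * inverse (real (Suc n))) \<longlonglongrightarrow> c * 0"
    by (intro tendsto_mult tendsto_const LIMSEQ_inverse_real_of_nat)
  then have "(\<lambda>n. c / (real n + 1)) \<longlonglongrightarrow> 0" by (simp add: divide_inverse add.commute)
  then have "(\<lambda>n. sqrt (c / (real n + 1))) \<longlonglongrightarrow> sqrt 0" by (rule tendsto_real_sqrt)
  then show ?thesis by simp
qed

theorem mainTheorem18:
  fixes x y :: nat
  assumes "x \<ge> 1" and "y \<ge> 1"
  shows "(\<lambda>n. measure_pmf.prob (edge_process x y n) {E. is_tdg x y n E}) \<longlonglongrightarrow> 1"
proof -
  define L where "L = (\<lambda>n. 1 - (sqrt ((real y + 1) / (real n + 1)) + sqrt ((real x + 1) / (real n + 1))))"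
  have "L \<longlonglongrightarrow> 1 - (0 + 0)"
    unfolding L_def by (intro tendsto_diff tendsto_add tendsto_const lim_aux)
  then have L1: "L \<longlonglongrightarrow> 1" by simp
  have low: "L n \<le> measure_pmf.prob (edge_process x y n) {E. is_tdg x y n E}" if n: "2*(x+y) \<le> n" for n
  proof -
    have Tv0: "terminal_vertices n {} = {1..n}" by (auto simp: terminal_vertices_def)
    have Iv0: "initial_vertices n {} = {1..n}" by (auto simp: initial_vertices_def)
    have n1: "1 \<le> n" using n assms by simp
    have "measure_pmf.prob (edge_process x y n) {E. \<not> is_tdg x y n E} \<le> phi x y n {}"
      unfolding edge_process_def
      by (rule main_bound) (use assms n card_Vn[of n] in \<open>simp_all add: Tv0 Iv0\<close>)
    also have "phi x y n {} = hpot y n + hpot x n"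
      using n1 by (simp add: phi_def t1_def t2_def Tv0 Iv0)
    also have "\<dots> \<le> sqrt ((real y + 1) / (real n + 1)) + sqrt ((real x + 1) / (real n + 1))"
      using hpot_sq[of y n] hpot_sq[of x n] n by (intro add_mono real_le_rsqrt) simp_all
    finally have bad: "measure_pmf.prob (edge_process x y n) {E. \<not> is_tdg x y n E}
      \<le> sqrt ((real y + 1) / (real n + 1)) + sqrt ((real x + 1) / (real n + 1))" .
    have "measure_pmf.prob (edge_process x y n) {E. is_tdg x y n E}
        = 1 - measure_pmf.prob (edge_process x y n) {E. \<not> is_tdg x y n E}"
      using measure_pmf.prob_compl[of "{E. \<not> is_tdg x y n E}" "edge_process x y n"]
      by (simp add: Compl_eq_Diff_UNIV[symmetric] Collect_neg_eq[symmetric])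
    then show ?thesis using bad unfolding L_def by simp
  qed
  show ?thesis
  proof (rule tendsto_sandwich[OF _ _ L1 tendsto_const])
    show "\<forall>\<^sub>F n in sequentially. L n \<le> measure_pmf.prob (edge_process x y n) {E. is_tdg x y n E}"
      using low by (intro eventually_sequentiallyI) 
    show "\<forall>\<^sub>F n in sequentially. measure_pmf.prob (edge_process x y n) {E. is_tdg x y n E} \<le> 1"
      by simp
  qed
qed

end
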